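(* If $f:R\to S$ is a morphism of real semigroups, then $f$ is also a morphism between the associated real reduced multirings (with $a+b=D^t(a,b)$ and $-g=(-1)g$); hence the assignment sending a real semigroup to its associated real reduced multiring and each morphism to itself is a functor $M:\mathcal{RS}\to\mathcal{MR}_{red}$.
   Context: A ternary semigroup is $(S,\cdot,1,0,-1)$ with: $(S,\cdot,1)$ a commutative semigroup with unity; $x^3=x$; $-1\ne1$, $(-1)(-1)=1$; $x0=0$; $x=(-1)x\Rightarrow x=0$. A real semigroup is a ternary semigroup with a ternary relation $D$, where $a\in D^t(b,c)$ means $a\in D(b,c)$, $-b\in D(-a,c)$, $-c\in D(b,-a)$, satisfying: (RS0) $c\in D(a,b)\iff c\in D(b,a)$; (RS1) $a\in D(a,b)$; (RS2) $a\in D(b,c)\Rightarrow ad\in D(bd,cd)$; (RS3) $a\in D^t(b,c)$, $c\in D^t(d,e)\Rightarrow\exists x\in D^t(b,d)$ with $a\in D^t(x,e)$; (RS4) $e\in D(c^2a,d^2b)\Rightarrow e\in D(a,b)$; (RS5) $ad=bd$, $ae=be$, $c\in D(d,e)\Rightarrow ac=bc$; (RS6) $c\in D(a,b)\Rightarrow c\in D^t(c^2a,c^2b)$; (RS7) $D^t(a,-b)\cap D^t(b,-a)\ne\emptyset\Rightarrow a=b$; (RS8) $a\in D(b,c)\Rightarrow a^2\in D(b^2,c^2)$. A morphism of real semigroups $f$ satisfies $f(ab)=f(a)f(b)$, $f(1)=1$, $f(0)=0$, $f(-1)=-1$ and $a\in D(b,c)\Rightarrow f(a)\in D(f(b),f(c))$;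 $\mathcal{RS}$ is the resulting category. A multiring is a tuple $(R,+,\cdot,-,0,1)$ with $+:R\times R\to\mathcal P(R)\setminus\{\emptyset\}$ satisfying: $z\in x+y\Rightarrow x\in z+(-y)$ and $y\in(-x)+z$; $y\in0+x\iff y=x$; $+$ associative and commutative; $(R,\cdot,1)$ a commutative monoid; $a0=0$; $c\in a+b\Rightarrow cd\in ad+bd$. Real reduced: $1\ne0$, $a^3=a$, $c\in a+ab^2\Rightarrow c=a$, $c,d\in a^2+b^2\Rightarrow c=d$. Multiring morphisms satisfy $c\in a+b\Rightarrow f(c)\in f(a)+f(b)$, $f(-a)=-f(a)$, $f(0)=0$, $f(ab)=f(a)f(b)$, $f(1)=1$; $\mathcal{MR}_{red}$ is the category of real reduced multirings. *)

theory Defs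
  imports Main
begin

record 'a rsg =
  rs_carrier :: "'a set"
  rs_mul :: "'a \<Rightarrow> 'a \<Rightarrow> 'a"
  rs_one :: 'a
  rs_zero :: 'a
  rs_mone :: 'a
  rs_D :: "'a \<Rightarrow> 'a \<Rightarrow> 'a set"

definition rs_neg :: "('a, 'm) rsg_scheme \<Rightarrow> 'a \<Rightarrow> 'a" where
  "rs_neg G x = rs_mul G (rs_mone G) x"

definition rs_Dt :: "('a, 'm) rsg_scheme \<Rightarrow> 'a \<Rightarrow> 'a \<Rightarrow> 'a set" where
  "rs_Dt G b c = {a. a \<in> rs_D G b c \<and> rs_neg G b \<in> rs_D G (rs_neg G a) c
                    \<and> rs_neg G c \<in> rs_D G b (rs_neg G a)}"

definition ternary_semigroup :: "('a, 'm) rsg_scheme \<Rightarrow> bool" where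
  "ternary_semigroup G \<longleftrightarrow>
     (let S = rs_carrier G; m = rs_mul G in
       (\<forall>x\<in>S. \<forall>y\<in>S. m x y \<in> S) \<and>
       rs_one G \<in> S \<and> rs_zero G \<in> S \<and> rs_mone G \<in> S \<and>
       (\<forall>x\<in>S. \<forall>y\<in>S. \<forall>z\<in>S. m (m x y) z = m x (m y z)) \<and>
       (\<forall>x\<in>S. \<forall>y\<in>S. m x y = m y x) \<and>
       (\<forall>x\<in>S. m (rs_one G) x = x) \<and>
       (\<forall>x\<in>S. m (m x x) x = x) \<and>
       rs_mone G \<noteq> rs_one G \<and>
       m (rs_mone G) (rs_mone G) = rs_one G \<and>
       (\<forall>x\<in>S. m x (rs_zero G) = rs_zero G) \<and>
       (\<forall>x\<in>S. x = m (rs_mone G) x \<longrightarrow> x = rs_zero G))"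

definition real_semigroup :: "('a, 'm) rsg_scheme \<Rightarrow> bool" where
  "real_semigroup G \<longleftrightarrow>
     (let S = rs_carrier G; m = rs_mul G; D = rs_D G; Dt = rs_Dt G; n = rs_neg G in
       ternary_semigroup G \<and>
       (\<forall>a\<in>S. \<forall>b\<in>S. D a b \<subseteq> S) \<and>
       \<comment> \<open>RS0\<close>
       (\<forall>a\<in>S. \<forall>b\<in>S. \<forall>c\<in>S. c \<in> D a b \<longleftrightarrow> c \<in> D b a) \<and>
       \<comment> \<open>RS1\<close>
       (\<forall>a\<in>S. \<forall>b\<in>S. a \<in> D a b) \<and>
       \<comment> \<open>RS2\<close>
       (\<forall>a\<in>S. \<forall>b\<in>S. \<forall>c\<in>S. \<forall>d\<in>S. a \<in> D b c \<longrightarrow> m a d \<in> D (m b d) (m c d)) \<and>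
       \<comment> \<open>RS3\<close>
       (\<forall>a\<in>S. \<forall>b\<in>S. \<forall>c\<in>S. \<forall>d\<in>S. \<forall>e\<in>S.
          a \<in> Dt b c \<and> c \<in> Dt d e \<longrightarrow> (\<exists>x\<in>S. x \<in> Dt b d \<and> a \<in> Dt x e)) \<and>
       \<comment> \<open>RS4\<close>
       (\<forall>a\<in>S. \<forall>b\<in>S. \<forall>c\<in>S. \<forall>d\<in>S. \<forall>e\<in>S.
          e \<in> D (m (m c c) a) (m (m d d) b) \<longrightarrow> e \<in> D a b) \<and>
       \<comment> \<open>RS5\<close>
       (\<forall>a\<in>S. \<forall>b\<in>S. \<forall>c\<in>S. \<forall>d\<in>S. \<forall>e\<in>S.
          m a d = m b d \<and> m a e = m b e \<and> c \<in> D d e \<longrightarrow> m a c = m b c) \<and>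
       \<comment> \<open>RS6\<close>
       (\<forall>a\<in>S. \<forall>b\<in>S. \<forall>c\<in>S. c \<in> D a b \<longrightarrow> c \<in> Dt (m (m c c) a) (m (m c c) b)) \<and>
       \<comment> \<open>RS7\<close>
       (\<forall>a\<in>S. \<forall>b\<in>S. Dt a (n b) \<inter> Dt b (n a) \<noteq> {} \<longrightarrow> a = b) \<and>
       \<comment> \<open>RS8\<close>
       (\<forall>a\<in>S. \<forall>b\<in>S. \<forall>c\<in>S. a \<in> D b c \<longrightarrow> m a a \<in> D (m b b) (m c c)))"

definition rs_morphism :: "('a, 'm) rsg_scheme \<Rightarrow> ('b, 'n) rsg_scheme \<Rightarrow> ('a \<Rightarrow> 'b) \<Rightarrow> bool" where
  "rs_morphism G H f \<longleftrightarrow>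
     (\<forall>x\<in>rs_carrier G. f x \<in> rs_carrier H) \<and>
     (\<forall>a\<in>rs_carrier G. \<forall>b\<in>rs_carrier G. f (rs_mul G a b) = rs_mul H (f a) (f b)) \<and>
     f (rs_one G) = rs_one H \<and> f (rs_zero G) = rs_zero H \<and> f (rs_mone G) = rs_mone H \<and>
     (\<forall>a\<in>rs_carrier G. \<forall>b\<in>rs_carrier G. \<forall>c\<in>rs_carrier G.
        a \<in> rs_D G b c \<longrightarrow> f a \<in> rs_D H (f b) (f c))"

record 'a mring =
  mr_carrier :: "'a set"
  mr_add :: "'a \<Rightarrow> 'a \<Rightarrow> 'a set"
  mr_mul :: "'a \<Rightarrow> 'a \<Rightarrow> 'a"
  mr_neg :: "'a \<Rightarrow> 'a"
  mr_zero :: 'a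
  mr_one :: 'a

definition mr_set_add :: "('a, 'm) mring_scheme \<Rightarrow> 'a set \<Rightarrow> 'a \<Rightarrow> 'a set" where
  "mr_set_add R A z = (\<Union>a\<in>A. mr_add R a z)"

definition mr_add_set :: "('a, 'm) mring_scheme \<Rightarrow> 'a \<Rightarrow> 'a set \<Rightarrow> 'a set" where
  "mr_add_set R x A = (\<Union>a\<in>A. mr_add R x a)"

definition multiring :: "('a, 'm) mring_scheme \<Rightarrow> bool" where
  "multiring R \<longleftrightarrow>
     (let M = mr_carrier R; p = mr_add R; m = mr_mul R; n = mr_neg R in
       (\<forall>x\<in>M. \<forall>y\<in>M. p x y \<subseteq> M \<and> p x y \<noteq> {}) \<and>
       (\<forall>x\<in>M. n x \<in> M) \<and>
       (\<forall>x\<in>M. \<forall>y\<in>M. m x y \<in> M) \<and>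
       mr_zero R \<in> M \<and> mr_one R \<in> M \<and>
       (\<forall>x\<in>M. \<forall>y\<in>M. \<forall>z\<in>M. z \<in> p x y \<longrightarrow> x \<in> p z (n y) \<and> y \<in> p (n x) z) \<and>
       (\<forall>x\<in>M. \<forall>y\<in>M. y \<in> p (mr_zero R) x \<longleftrightarrow> y = x) \<and>
       (\<forall>x\<in>M. \<forall>y\<in>M. \<forall>z\<in>M. mr_set_add R (p x y) z = mr_add_set R x (p y z)) \<and>
       (\<forall>x\<in>M. \<forall>y\<in>M. p x y = p y x) \<and>
       (\<forall>x\<in>M. \<forall>y\<in>M. \<forall>z\<in>M. m (m x y) z = m x (m y z)) \<and>
       (\<forall>x\<in>M. \<forall>y\<in>M. m x y = m y x) \<and>
       (\<forall>x\<in>M. m (mr_one R) x = x) \<and>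
       (\<forall>a\<in>M. m a (mr_zero R) = mr_zero R) \<and>
       (\<forall>a\<in>M. \<forall>b\<in>M. \<forall>c\<in>M. \<forall>d\<in>M. c \<in> p a b \<longrightarrow> m c d \<in> p (m a d) (m b d)))"

definition real_reduced_multiring :: "('a, 'm) mring_scheme \<Rightarrow> bool" where
  "real_reduced_multiring R \<longleftrightarrow>
     (let M = mr_carrier R; p = mr_add R; m = mr_mul R in
       multiring R \<and>
       mr_one R \<noteq> mr_zero R \<and>
       (\<forall>a\<in>M. m (m a a) a = a) \<and>
       (\<forall>a\<in>M. \<forall>b\<in>M. \<forall>c\<in>M. c \<in> p a (m a (m b b)) \<longrightarrow> c = a) \<and>
       (\<forall>a\<in>M. \<forall>b\<in>M. \<forall>c\<in>M. \<forall>d\<in>M. c \<in> p (m a a) (m b b) \<and> d \<in> p (m a a) (m b b) \<longrightarrow> c = d))"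

definition mr_morphism :: "('a, 'm) mring_scheme \<Rightarrow> ('b, 'n) mring_scheme \<Rightarrow> ('a \<Rightarrow> 'b) \<Rightarrow> bool" where
  "mr_morphism R T f \<longleftrightarrow>
     (\<forall>x\<in>mr_carrier R. f x \<in> mr_carrier T) \<and>
     (\<forall>a\<in>mr_carrier R. \<forall>b\<in>mr_carrier R. \<forall>c\<in>mr_carrier R.
        c \<in> mr_add R a b \<longrightarrow> f c \<in> mr_add T (f a) (f b)) \<and>
     (\<forall>a\<in>mr_carrier R. f (mr_neg R a) = mr_neg T (f a)) \<and>
     f (mr_zero R) = mr_zero T \<and>
     (\<forall>a\<in>mr_carrier R. \<forall>b\<in>mr_carrier R. f (mr_mul R a b) = mr_mul T (f a) (f b)) \<and>
     f (mr_one R) = mr_one T"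

definition assoc_mr :: "('a, 'm) rsg_scheme \<Rightarrow> 'a mring" where
  "assoc_mr G = \<lparr> mr_carrier = rs_carrier G,
                 mr_add = (\<lambda>a b. rs_Dt G a b),
                 mr_mul = rs_mul G,
                 mr_neg = rs_neg G,
                 mr_zero = rs_zero G,
                 mr_one = rs_one G \<rparr>"

end

theory Submission
  imports Defs
begin

locale RSG = fixes G :: "('a,'m) rsg_scheme" assumes RSG: "real_semigroup G"
begin
abbreviation "S \<equiv> rs_carrier G"
abbreviation "mul \<equiv> rs_mul G"
abbreviation "mo \<equiv> rs_mone G"
abbreviation "o1 \<equiv> rs_one G"
abbreviation "z0 \<equiv> rs_zero G"
abbreviation "DD \<equiv> rs_D G"
abbreviation "Dt \<equiv> rs_Dt G"
abbreviation "ng \<equiv> rs_neg G"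

lemmas RSall = RSG[unfolded real_semigroup_def Let_def]
lemma ts: "ternary_semigroup G" using RSall by blast
lemmas TSall = ts[unfolded ternary_semigroup_def Let_def]
lemma cl: "x\<in>S \<Longrightarrow> y\<in>S \<Longrightarrow> mul x y \<in> S" using TSall[THEN conjunct1] by blast
lemma S1: "o1 \<in> S" using TSall[THEN conjunct2, THEN conjunct1] by blast
lemma S0: "z0 \<in> S" using TSall[THEN conjunct2, THEN conjunct2, THEN conjunct1] by blast
lemma Sm: "mo \<in> S" using TSall[THEN conjunct2, THEN conjunct2, THEN conjunct2, THEN conjunct1] by blast
lemma ass: "x\<in>S \<Longrightarrow> y\<in>S \<Longrightarrow> z\<in>S \<Longrightarrow> mul (mul x y) z = mul x (mul y z)" using TSall[THEN conjunct2, THEN conjunct2, THEN conjunct2, THEN conjunct2, THEN conjunct1] by blast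
lemma com: "x\<in>S \<Longrightarrow> y\<in>S \<Longrightarrow> mul x y = mul y x" using TSall[THEN conjunct2, THEN conjunct2, THEN conjunct2, THEN conjunct2, THEN conjunct2, THEN conjunct1] by blast
lemma unit: "x\<in>S \<Longrightarrow> mul o1 x = x" using TSall[THEN conjunct2, THEN conjunct2, THEN conjunct2, THEN conjunct2, THEN conjunct2, THEN conjunct2, THEN conjunct1] by blast
lemma cube: "x\<in>S \<Longrightarrow> mul (mul x x) x = x" using TSall[THEN conjunct2, THEN conjunct2, THEN conjunct2, THEN conjunct2, THEN conjunct2, THEN conjunct2, THEN conjunct2, THEN conjunct1] by blast
lemma mone: "mo \<noteq> o1" using TSall[THEN conjunct2, THEN conjunct2, THEN conjunct2, THEN conjunct2, THEN conjunct2, THEN conjunct2, THEN conjunct2, THEN conjunct2, THEN conjunct1] by blast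
lemma momo: "mul mo mo = o1" using TSall[THEN conjunct2, THEN conjunct2, THEN conjunct2, THEN conjunct2, THEN conjunct2, THEN conjunct2, THEN conjunct2, THEN conjunct2, THEN conjunct2, THEN conjunct1] by blast
lemma zer: "x\<in>S \<Longrightarrow> mul x z0 = z0" using TSall[THEN conjunct2, THEN conjunct2, THEN conjunct2, THEN conjunct2, THEN conjunct2, THEN conjunct2, THEN conjunct2, THEN conjunct2, THEN conjunct2, THEN conjunct2, THEN conjunct1] by blast
lemma DS: "a\<in>S \<Longrightarrow> b\<in>S \<Longrightarrow> c \<in> DD a b \<Longrightarrow> c \<in> S" using RSall[THEN conjunct2, THEN conjunct1] by blast
lemma RS0: "a\<in>S \<Longrightarrow> b\<in>S \<Longrightarrow> c\<in>S \<Longrightarrow> c \<in> DD a b \<Longrightarrow> c \<in> DD b a" using RSall[THEN conjunct2, THEN conjunct2, THEN conjunct1] by blast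
lemma RS1: "a\<in>S \<Longrightarrow> b\<in>S \<Longrightarrow> a \<in> DD a b" using RSall[THEN conjunct2, THEN conjunct2, THEN conjunct2, THEN conjunct1] by blast
lemma RS2: "a\<in>S \<Longrightarrow> b\<in>S \<Longrightarrow> c\<in>S \<Longrightarrow> d\<in>S \<Longrightarrow> a \<in> DD b c \<Longrightarrow> mul a d \<in> DD (mul b d) (mul c d)" using RSall[THEN conjunct2, THEN conjunct2, THEN conjunct2, THEN conjunct2, THEN conjunct1] by blast
lemma RS3: "a\<in>S \<Longrightarrow> b\<in>S \<Longrightarrow> c\<in>S \<Longrightarrow> d\<in>S \<Longrightarrow> e\<in>S \<Longrightarrow> a \<in> Dt b c \<Longrightarrow> c \<in> Dt d e \<Longrightarrow> \<exists>x\<in>S. x \<in> Dt b d \<and> a \<in> Dt x e" using RSall[THEN conjunct2, THEN conjunct2, THEN conjunct2, THEN conjunct2, THEN conjunct2, THEN conjunct1] by blast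
lemma RS4: "a\<in>S \<Longrightarrow> b\<in>S \<Longrightarrow> c\<in>S \<Longrightarrow> d\<in>S \<Longrightarrow> e\<in>S \<Longrightarrow> e \<in> DD (mul (mul c c) a) (mul (mul d d) b) \<Longrightarrow> e \<in> DD a b" using RSall[THEN conjunct2, THEN conjunct2, THEN conjunct2, THEN conjunct2, THEN conjunct2, THEN conjunct2, THEN conjunct1] by blast
lemma RS5: "a\<in>S \<Longrightarrow> b\<in>S \<Longrightarrow> c\<in>S \<Longrightarrow> d\<in>S \<Longrightarrow> e\<in>S \<Longrightarrow> mul a d = mul b d \<Longrightarrow> mul a e = mul b e \<Longrightarrow> c \<in> DD d e \<Longrightarrow> mul a c = mul b c" using RSall[THEN conjunct2, THEN conjunct2, THEN conjunct2, THEN conjunct2, THEN conjunct2, THEN conjunct2, THEN conjunct2, THEN conjunct1] by blast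
lemma RS6: "a\<in>S \<Longrightarrow> b\<in>S \<Longrightarrow> c\<in>S \<Longrightarrow> c \<in> DD a b \<Longrightarrow> c \<in> Dt (mul (mul c c) a) (mul (mul c c) b)" using RSall[THEN conjunct2, THEN conjunct2, THEN conjunct2, THEN conjunct2, THEN conjunct2, THEN conjunct2, THEN conjunct2, THEN conjunct2, THEN conjunct1] by blast
lemma RS7: "a\<in>S \<Longrightarrow> b\<in>S \<Longrightarrow> x \<in> Dt a (ng b) \<Longrightarrow> x \<in> Dt b (ng a) \<Longrightarrow> a = b" using RSall[THEN conjunct2, THEN conjunct2, THEN conjunct2, THEN conjunct2, THEN conjunct2, THEN conjunct2, THEN conjunct2, THEN conjunct2, THEN conjunct2, THEN conjunct1] by blast

lemma Dt_iff: "a \<in> Dt b c \<longleftrightarrow> a \<in> DD b c \<and> ng b \<in> DD (ng a) c \<and> ng c \<in> DD b (ng a)"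
  by (simp add: rs_Dt_def)

lemma nS: "x\<in>S \<Longrightarrow> ng x \<in> S" by (simp add: rs_neg_def cl Sm)
lemma nn: "x\<in>S \<Longrightarrow> ng (ng x) = x" unfolding rs_neg_def by (simp add: ass[symmetric] Sm momo unit)
lemma nmul1: "x\<in>S \<Longrightarrow> y\<in>S \<Longrightarrow> mul (ng x) y = ng (mul x y)" unfolding rs_neg_def by (simp add: ass Sm)
lemma nmul2: "x\<in>S \<Longrightarrow> y\<in>S \<Longrightarrow> mul x (ng y) = ng (mul x y)"
  unfolding rs_neg_def proof -
  assume a: "x\<in>S" "y\<in>S"
  have "mul x (mul mo y) = mul (mul x mo) y" using a by (simp add: ass Sm)
  also have "\<dots> = mul (mul mo x) y" using a by (simp add: com Sm)
  also have "\<dots> = mul mo (mul x y)" using a by (simp add: ass Sm)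
  finally show "mul x (mul mo y) = mul mo (mul x y)" .
qed
lemma mmo: "x\<in>S \<Longrightarrow> mul x mo = ng x" unfolding rs_neg_def using com[of x mo] Sm by simp
lemma nz: "ng z0 = z0" unfolding rs_neg_def by (simp add: zer Sm)
lemma mulz: "x\<in>S \<Longrightarrow> mul z0 x = z0" using com[of x z0] zer S0 by simp
lemma mul1: "x\<in>S \<Longrightarrow> mul x o1 = x" using com[of x o1] unit S1 by simp

lemma DtS: "a\<in>S \<Longrightarrow> b\<in>S \<Longrightarrow> c \<in> Dt a b \<Longrightarrow> c \<in> S" using DS Dt_iff by blast

lemma Dneg: "a\<in>S \<Longrightarrow> b\<in>S \<Longrightarrow> c \<in> DD a b \<Longrightarrow> ng c \<in> DD (ng a) (ng b)"
proof -
  assume a: "a\<in>S" "b\<in>S" "c \<in> DD a b"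
  hence "c \<in> S" using DS by blast
  from RS2[OF this a(1,2) Sm a(3)] show ?thesis
    using a \<open>c\<in>S\<close> by (simp only: mmo)
qed

lemma Dneg': "a\<in>S \<Longrightarrow> b\<in>S \<Longrightarrow> ng c \<in> DD (ng a) (ng b) \<Longrightarrow> c\<in>S \<Longrightarrow> c \<in> DD a b"
proof -
  assume a: "a\<in>S" "b\<in>S" "ng c \<in> DD (ng a) (ng b)" "c\<in>S"
  have "ng (ng c) \<in> DD (ng (ng a)) (ng (ng b))" using Dneg[OF nS[OF a(1)] nS[OF a(2)] a(3)] .
  thus ?thesis using nn[OF a(1)] nn[OF a(2)] nn[OF a(4)] by simp
qed

lemma D0: "a\<in>S \<Longrightarrow> b\<in>S \<Longrightarrow> z0 \<in> DD a b"
proof -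
  assume a: "a\<in>S" "b\<in>S"
  have "mul a z0 \<in> DD (mul a z0) (mul b z0)" using RS2[OF a(1) a(1) a(2) S0 RS1[OF a]] .
  moreover have "mul a z0 = z0" "mul b z0 = z0" "mul (mul z0 z0) a = z0" "mul (mul z0 z0) b = z0"
    by (simp_all only: zer[OF a(1)] zer[OF a(2)] zer[OF S0] mulz[OF a(1)] mulz[OF a(2)])
  ultimately have "z0 \<in> DD (mul (mul z0 z0) a) (mul (mul z0 z0) b)" by (simp only:)
  thus ?thesis using RS4[OF a S0 S0 S0] by blast
qed

lemma Dsym: "a\<in>S \<Longrightarrow> b\<in>S \<Longrightarrow> c \<in> DD a b \<Longrightarrow> c \<in> DD b a"
  by (rule RS0) (auto intro: DS)

lemma Dt_sym: "a\<in>S \<Longrightarrow> b\<in>S \<Longrightarrow> c \<in> Dt a b \<Longrightarrow> c \<in> Dt b a"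
proof -
  assume a: "a\<in>S" "b\<in>S" "c \<in> Dt a b"
  hence c: "c\<in>S" by (rule DtS)
  from a(3) have h: "c \<in> DD a b" "ng a \<in> DD (ng c) b" "ng b \<in> DD a (ng c)" by (auto simp: Dt_iff)
  show ?thesis unfolding Dt_iff using Dsym[OF a(1,2) h(1)] Dsym[OF nS[OF c] a(2) h(2)] Dsym[OF a(1) nS[OF c] h(3)] by blast
qed

lemma Dt_rev1: "x\<in>S \<Longrightarrow> y\<in>S \<Longrightarrow> z \<in> Dt x y \<Longrightarrow> x \<in> Dt z (ng y)"
proof -
  assume a: "x\<in>S" "y\<in>S" "z \<in> Dt x y"
  hence z: "z\<in>S" using DtS by blast
  from a(3) have h: "z \<in> DD x y" "ng x \<in> DD (ng z) y" "ng y \<in> DD x (ng z)" by (auto simp: Dt_iff)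
  have 1: "ng (ng x) \<in> DD (ng (ng z)) (ng y)" using Dneg[OF nS[OF z] a(2) h(2)] .
  hence 1: "x \<in> DD z (ng y)" by (simp only: nn[OF a(1)] nn[OF z])
  have 2: "ng z \<in> DD (ng x) (ng y)" using Dneg[OF a(1,2) h(1)] .
  have 3: "ng (ng y) \<in> DD (ng x) (ng (ng z))" using Dneg[OF a(1) nS[OF z] h(3)] .
  hence "ng (ng y) \<in> DD (ng x) z" by (simp only: nn[OF z])
  hence 3: "ng (ng y) \<in> DD z (ng x)" using Dsym[OF nS[OF a(1)] z] by blast
  show ?thesis unfolding Dt_iff using 1 2 3 by blast
qed


lemma lcom: "x\<in>S \<Longrightarrow> y\<in>S \<Longrightarrow> z\<in>S \<Longrightarrow> mul x (mul y z) = mul y (mul x z)"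
  by (metis ass com)
lemma cube': "x\<in>S \<Longrightarrow> mul x (mul x x) = x" using cube com cl by metis
lemma cube'': "x\<in>S \<Longrightarrow> y\<in>S \<Longrightarrow> mul x (mul x (mul x y)) = mul x y"
  by (metis ass cube cl)
lemmas AC = ass com lcom cl cube' cube'' nS S0 S1 Sm unit mul1


lemma Dt_rev2: "x\<in>S \<Longrightarrow> y\<in>S \<Longrightarrow> z \<in> Dt x y \<Longrightarrow> y \<in> Dt (ng x) z"
proof -
  assume a: "x\<in>S" "y\<in>S" "z \<in> Dt x y"
  hence z: "z\<in>S" using DtS by blast
  have "z \<in> Dt y x" using Dt_sym[OF a] .
  hence "y \<in> Dt z (ng x)" using Dt_rev1[OF a(2,1)] by blast
  thus ?thesis using Dt_sym[OF z nS[OF a(1)]] by blast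
qed

lemma Dt_x0: "x\<in>S \<Longrightarrow> x \<in> Dt x z0"
  unfolding Dt_iff using RS1[of x z0] RS1[of "ng x" z0] D0[of x "ng x"] nz nS S0 by simp

lemma Dt_0y: "y\<in>S \<Longrightarrow> z0 \<in> Dt y (ng y)"
proof -
  assume y: "y\<in>S"
  have 1: "z0 \<in> DD y (ng y)" using D0 y nS by blast
  have 2: "ng y \<in> DD z0 (ng y)" using Dsym[OF nS[OF y] S0 RS1[OF nS[OF y] S0]] .
  have 3: "y \<in> DD y z0" using RS1[OF y S0] .
  show ?thesis unfolding Dt_iff using 1 2 3 by (simp add: nz nn[OF y])
qed

lemma Dt_ne: "x\<in>S \<Longrightarrow> y\<in>S \<Longrightarrow> Dt x y \<noteq> {}"
proof -
  assume a: "x\<in>S" "y\<in>S"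
  from RS3[OF a(1) a(1) S0 a(2) nS[OF a(2)] Dt_x0[OF a(1)] Dt_0y[OF a(2)]]
  show ?thesis by blast
qed

lemma Dt_zero: "x\<in>S \<Longrightarrow> y\<in>S \<Longrightarrow> (y \<in> Dt z0 x) = (y = x)"
proof
  assume a: "x\<in>S" "y\<in>S" "y \<in> Dt z0 x"
  from a(3) have h: "y \<in> DD z0 x" "ng z0 \<in> DD (ng y) x" "ng x \<in> DD z0 (ng y)" by (auto simp: Dt_iff)
  have h1: "ng y \<in> DD z0 (ng x)" using Dneg[OF S0 a(1) h(1)] nz by simp
  have h3: "ng (ng x) \<in> DD z0 (ng (ng y))" using Dneg[OF S0 nS[OF a(2)] h(3)] nz by simp
  hence h3: "x \<in> DD z0 y" by (simp only: nn a(1,2))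
  have w1: "z0 \<in> Dt y (ng x)" unfolding Dt_iff
    using D0[OF a(2) nS[OF a(1)]] h1 Dsym[OF S0 a(2) h3] by (simp add: nz nn a(1))
  have w2: "z0 \<in> Dt x (ng y)" unfolding Dt_iff
    using D0[OF a(1) nS[OF a(2)]] h(3) Dsym[OF S0 a(1) h(1)] by (simp add: nz nn a(2))
  show "y = x" using RS7[OF a(2) a(1) w1 w2] .
next
  assume a: "x\<in>S" "y\<in>S" "y = x"
  thus "y \<in> Dt z0 x" using Dt_sym[OF a(1) S0 Dt_x0[OF a(1)]] by simp
qed

lemma Dt_assoc: "x\<in>S \<Longrightarrow> y\<in>S \<Longrightarrow> z\<in>S \<Longrightarrow> (\<Union>a\<in>Dt x y. Dt a z) = (\<Union>a\<in>Dt y z. Dt x a)"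
proof (intro equalityI subsetI)
  fix w assume s: "x\<in>S" "y\<in>S" "z\<in>S" and "w \<in> (\<Union>a\<in>Dt x y. Dt a z)"
  then obtain a where a: "a \<in> Dt x y" "w \<in> Dt a z" by blast
  have aS: "a\<in>S" using DtS[OF s(1,2) a(1)] .
  have wS: "w\<in>S" using DtS[OF aS s(3) a(2)] .
  from RS3[OF wS s(3) aS s(2) s(1) Dt_sym[OF aS s(3) a(2)] Dt_sym[OF s(1,2) a(1)]]
  obtain u where u: "u\<in>S" "u \<in> Dt z y" "w \<in> Dt u x" by blast
  show "w \<in> (\<Union>a\<in>Dt y z. Dt x a)" using Dt_sym[OF s(3) s(2) u(2)] Dt_sym[OF u(1) s(1) u(3)] by blast
next
  fix w assume s: "x\<in>S" "y\<in>S" "z\<in>S" and "w \<in> (\<Union>a\<in>Dt y z. Dt x a)"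
  then obtain a where a: "a \<in> Dt y z" "w \<in> Dt x a" by blast
  have aS: "a\<in>S" using DtS[OF s(2,3) a(1)] .
  have wS: "w\<in>S" using DtS[OF s(1) aS a(2)] .
  from RS3[OF wS s(1) aS s(2) s(3) a(2) a(1)]
  show "w \<in> (\<Union>a\<in>Dt x y. Dt a z)" by blast
qed

lemma Dt_dist: "a\<in>S \<Longrightarrow> b\<in>S \<Longrightarrow> d\<in>S \<Longrightarrow> c \<in> Dt a b \<Longrightarrow> mul c d \<in> Dt (mul a d) (mul b d)"
proof -
  assume s: "a\<in>S" "b\<in>S" "d\<in>S" "c \<in> Dt a b"
  have c: "c\<in>S" using DtS[OF s(1,2,4)] .
  from s(4) have h: "c \<in> DD a b" "ng a \<in> DD (ng c) b" "ng b \<in> DD a (ng c)" by (auto simp: Dt_iff)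
  have 1: "mul c d \<in> DD (mul a d) (mul b d)" using RS2[OF c s(1,2,3) h(1)] .
  have 2: "mul (ng a) d \<in> DD (mul (ng c) d) (mul b d)" using RS2[OF nS[OF s(1)] nS[OF c] s(2,3) h(2)] .
  have 3: "mul (ng b) d \<in> DD (mul a d) (mul (ng c) d)" using RS2[OF nS[OF s(2)] s(1) nS[OF c] s(3) h(3)] .
  show ?thesis unfolding Dt_iff using 1 2 3 by (simp add: nmul1 s c)
qed

lemma dupD: "a\<in>S \<Longrightarrow> c\<in>S \<Longrightarrow> c \<in> DD a a \<Longrightarrow> c = mul (mul c c) a"
proof -
  assume s: "a\<in>S" "c\<in>S" "c \<in> DD a a"
  have q: "mul o1 a = mul (mul a a) a" using unit cube s by simp
  have "mul o1 c = mul (mul a a) c" using RS5[OF S1 cl[OF s(1) s(1)] s(2) s(1) s(1) q q s(3)] .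
  hence e: "mul a (mul a c) = c" using s by (simp add: unit AC)
  define u where "u = mul (mul c c) a"
  have u: "u\<in>S" unfolding u_def using s by (simp add: cl)
  have 2: "c \<in> Dt u u" unfolding u_def using RS6[OF s(1) s(1) s(2) s(3)] .
  have 3: "mul (mul u u) c = c" unfolding u_def using s e by (simp add: AC)
  have 4: "u \<in> Dt (mul (mul u u) u) (mul (mul u u) (ng c))" using RS6[OF u nS[OF s(2)] u RS1[OF u nS[OF s(2)]]] .
  have "mul (mul u u) (ng c) = ng c" using nmul2[OF cl[OF u u] s(2)] 3 by simp
  hence 4: "u \<in> Dt u (ng c)" using 4 cube[OF u] by simp
  have 5: "u \<in> Dt c (ng u)" using Dt_rev1[OF u u 2] .
  have "c = u" using RS7[OF s(2) u 5 4] .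
  thus ?thesis unfolding u_def .
qed

lemma dupDt: "x\<in>S \<Longrightarrow> y\<in>S \<Longrightarrow> y \<in> Dt x x \<Longrightarrow> y = x"
proof -
  assume s: "x\<in>S" "y\<in>S" "y \<in> Dt x x"
  have "y \<in> DD x x" using s(3) by (simp add: Dt_iff)
  hence e: "mul (mul y y) x = y" using dupD[OF s(1,2)] by simp
  have "mul (mul x x) (mul (mul y y) x) = mul (mul y y) x" using s by (simp add: AC)
  hence e2: "mul (mul x x) y = y" using e by simp
  have 4: "x \<in> Dt (mul (mul x x) x) (mul (mul x x) (ng y))" using RS6[OF s(1) nS[OF s(2)] s(1) RS1[OF s(1) nS[OF s(2)]]] .
  have "mul (mul x x) (ng y) = ng y" using nmul2[OF cl[OF s(1) s(1)] s(2)] e2 by simp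
  hence 4: "x \<in> Dt x (ng y)" using 4 cube[OF s(1)] by simp
  have 5: "x \<in> Dt y (ng x)" using Dt_rev1[OF s(1) s(1) s(3)] .
  show ?thesis using RS7[OF s(2) s(1) 5 4] .
qed

lemma Glem: "x\<in>S \<Longrightarrow> y\<in>S \<Longrightarrow> y \<in> DD x (ng y) \<Longrightarrow> mul (mul y y) x = y"
proof -
  assume s: "x\<in>S" "y\<in>S" "y \<in> DD x (ng y)"
  have 1: "y \<in> Dt (mul (mul y y) x) (mul (mul y y) (ng y))" using RS6[OF s(1) nS[OF s(2)] s(2) s(3)] .
  have "mul (mul y y) (ng y) = ng y" using nmul2[OF cl[OF s(2) s(2)] s(2)] cube[OF s(2)] by simp
  hence 1: "y \<in> Dt (mul (mul y y) x) (ng y)" using 1 by simp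
  have "mul (mul y y) x \<in> Dt y (ng (ng y))" using Dt_rev1[OF _ nS[OF s(2)] 1] s by (simp add: cl)
  hence "mul (mul y y) x \<in> Dt y y" using nn[OF s(2)] by simp
  thus ?thesis using dupDt[OF s(2)] s by (simp add: cl)
qed

lemma R1: "a\<in>S \<Longrightarrow> b\<in>S \<Longrightarrow> c\<in>S \<Longrightarrow> c \<in> Dt a (mul a (mul b b)) \<Longrightarrow> c = a"
proof -
  assume s: "a\<in>S" "b\<in>S" "c\<in>S" "c \<in> Dt a (mul a (mul b b))"
  have bb: "mul a (mul b b) \<in> S" using s by (simp add: cl)
  have "c \<in> DD a (mul a (mul b b))" using s(4) by (simp add: Dt_iff)
  moreover have "mul (mul o1 o1) a = a" "mul (mul b b) a = mul a (mul b b)" using s by (simp_all add: AC unit)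
  ultimately have "c \<in> DD (mul (mul o1 o1) a) (mul (mul b b) a)" by simp
  hence "c \<in> DD a a" using RS4[OF s(1) s(1) S1 s(2) s(3)] by blast
  hence e1: "c = mul (mul c c) a" using dupD[OF s(1) s(3)] by blast
  have "a \<in> Dt c (ng (mul a (mul b b)))" using Dt_rev1[OF s(1) bb s(4)] .
  hence "a \<in> DD c (ng (mul a (mul b b)))" by (simp add: Dt_iff)
  moreover have "mul (mul o1 o1) c = c" "ng (mul a (mul b b)) = mul (mul b b) (ng a)"
    using s by (simp_all add: AC unit nmul1 nmul2)
  ultimately have "a \<in> DD (mul (mul o1 o1) c) (mul (mul b b) (ng a))" by simp
  hence "a \<in> DD c (ng a)" using RS4[OF s(3) nS[OF s(1)] S1 s(2) s(1)] by blast
  hence e2: "mul (mul a a) c = a" using Glem[OF s(3) s(1)] by blast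
  have "mul (mul c c) (mul (mul a a) c) = mul (mul a a) c" using s by (simp add: AC)
  thus ?thesis using e1 e2 by simp
qed

lemma sq_le: "a\<in>S \<Longrightarrow> b\<in>S \<Longrightarrow> d\<in>S \<Longrightarrow> d \<in> Dt (mul a a) (mul b b) \<Longrightarrow> mul d (mul a a) = mul a a"
proof -
  assume s: "a\<in>S" "b\<in>S" "d\<in>S" "d \<in> Dt (mul a a) (mul b b)"
  have aa: "mul a a \<in> S" and bb: "mul b b \<in> S" using s by (simp_all add: cl)
  have "ng (mul a a) \<in> DD (ng d) (mul b b)" using s(4) by (simp add: Dt_iff)
  hence "ng (ng (mul a a)) \<in> DD (ng (ng d)) (ng (mul b b))" using Dneg[OF nS[OF s(3)] bb] by blast
  hence "mul a a \<in> DD d (ng (mul b b))" using nn aa s(3) by simp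
  moreover have "mul (mul o1 o1) d = d" "ng (mul b b) = mul (mul b b) mo" using s by (simp_all add: unit mmo cl S1)
  ultimately have "mul a a \<in> DD (mul (mul o1 o1) d) (mul (mul b b) mo)" by simp
  hence "mul a a \<in> DD d mo" using RS4[OF s(3) Sm S1 s(2) aa] by blast
  hence "mul (mul a a) (mul a a) \<in> DD (mul d (mul a a)) (mul mo (mul a a))" using RS2[OF aa s(3) Sm aa] by blast
  moreover have "mul (mul a a) (mul a a) = mul a a" "mul mo (mul a a) = ng (mul a a)" using s by (simp_all add: AC rs_neg_def)
  ultimately have "mul a a \<in> DD (mul d (mul a a)) (ng (mul a a))" by simp
  hence "mul (mul (mul a a) (mul a a)) (mul d (mul a a)) = mul a a" using Glem[OF cl[OF s(3) aa] aa] by blast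
  moreover have "mul (mul (mul a a) (mul a a)) (mul d (mul a a)) = mul d (mul a a)" using s by (simp add: AC)
  ultimately show ?thesis by simp
qed

lemma R2: "a\<in>S \<Longrightarrow> b\<in>S \<Longrightarrow> c\<in>S \<Longrightarrow> d\<in>S \<Longrightarrow> c \<in> Dt (mul a a) (mul b b) \<Longrightarrow> d \<in> Dt (mul a a) (mul b b) \<Longrightarrow> c = d"
proof -
  assume s: "a\<in>S" "b\<in>S" "c\<in>S" "d\<in>S" "c \<in> Dt (mul a a) (mul b b)" "d \<in> Dt (mul a a) (mul b b)"
  have aa: "mul a a \<in> S" and bb: "mul b b \<in> S" using s by (simp_all add: cl)
  have c1: "mul c (mul a a) = mul a a" using sq_le[OF s(1,2,3,5)] .
  have c2: "mul c (mul b b) = mul b b" using sq_le[OF s(2,1,3) Dt_sym[OF aa bb s(5)]] .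
  have d1: "mul d (mul a a) = mul a a" using sq_le[OF s(1,2,4,6)] .
  have d2: "mul d (mul b b) = mul b b" using sq_le[OF s(2,1,4) Dt_sym[OF aa bb s(6)]] .
  have cD: "c \<in> DD (mul a a) (mul b b)" and dD: "d \<in> DD (mul a a) (mul b b)" using s(5,6) by (simp_all add: Dt_iff)
  have "mul o1 c = mul d c" using RS5[OF S1 s(4) s(3) aa bb _ _ cD] d1 d2 unit aa bb by simp
  moreover have "mul o1 d = mul c d" using RS5[OF S1 s(3) s(4) aa bb _ _ dD] c1 c2 unit aa bb by simp
  ultimately show ?thesis using com[OF s(3,4)] unit s(3,4) by simp
qed

lemma one_ne_zero: "o1 \<noteq> z0"
proof
  assume "o1 = z0"
  hence "mul mo o1 = mul mo z0" by simp
  hence "mo = z0" using mul1[OF Sm] zer[OF Sm] by simp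
  with \<open>o1 = z0\<close> show False using mone by simp
qed

lemma assoc_simps: "mr_carrier (assoc_mr G) = S" "mr_add (assoc_mr G) = Dt" "mr_mul (assoc_mr G) = mul"
  "mr_neg (assoc_mr G) = ng" "mr_zero (assoc_mr G) = z0" "mr_one (assoc_mr G) = o1"
  by (simp_all add: assoc_mr_def)

lemma multiring_assoc: "multiring (assoc_mr G)"
  unfolding multiring_def Let_def assoc_simps mr_set_add_def mr_add_set_def
proof (intro conjI ballI impI)
  fix x y assume "x\<in>S" "y\<in>S" thus "Dt x y \<subseteq> S" using DtS by blast
next
  fix x y assume "x\<in>S" "y\<in>S" thus "Dt x y \<noteq> {}" by (rule Dt_ne)
next
  fix x assume "x\<in>S" thus "ng x \<in> S" by (rule nS)
next
  fix x y assume "x\<in>S" "y\<in>S" thus "mul x y \<in> S" by (rule cl)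
next
  show "z0 \<in> S" by (rule S0)
next
  show "o1 \<in> S" by (rule S1)
next
  fix x y z assume "x\<in>S" "y\<in>S" "z\<in>S" "z \<in> Dt x y" thus "x \<in> Dt z (ng y)" using Dt_rev1 by blast
next
  fix x y z assume "x\<in>S" "y\<in>S" "z\<in>S" "z \<in> Dt x y" thus "y \<in> Dt (ng x) z" using Dt_rev2 by blast
next
  fix x y assume "x\<in>S" "y\<in>S" thus "(y \<in> Dt z0 x) = (y = x)" by (rule Dt_zero)
next
  fix x y z assume "x\<in>S" "y\<in>S" "z\<in>S" thus "(\<Union>a\<in>Dt x y. Dt a z) = (\<Union>a\<in>Dt y z. Dt x a)" by (rule Dt_assoc)
next
  fix x y assume "x\<in>S" "y\<in>S" thus "Dt x y = Dt y x" using Dt_sym by blast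
next
  fix x y z assume "x\<in>S" "y\<in>S" "z\<in>S" thus "mul (mul x y) z = mul x (mul y z)" by (rule ass)
next
  fix x y assume "x\<in>S" "y\<in>S" thus "mul x y = mul y x" by (rule com)
next
  fix x assume "x\<in>S" thus "mul o1 x = x" by (rule unit)
next
  fix x assume "x\<in>S" thus "mul x z0 = z0" by (rule zer)
next
  fix a b c d assume "a\<in>S" "b\<in>S" "c\<in>S" "d\<in>S" "c \<in> Dt a b" thus "mul c d \<in> Dt (mul a d) (mul b d)" using Dt_dist by blast
qed

lemma rrm_assoc: "real_reduced_multiring (assoc_mr G)"
  unfolding real_reduced_multiring_def Let_def
proof (intro conjI)
  show "multiring (assoc_mr G)" by (rule multiring_assoc)
  show "mr_one (assoc_mr G) \<noteq> mr_zero (assoc_mr G)" using one_ne_zero by (simp add: assoc_simps)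
  show "\<forall>a\<in>mr_carrier (assoc_mr G). mr_mul (assoc_mr G) (mr_mul (assoc_mr G) a a) a = a" by (simp add: assoc_simps cube)
  show "\<forall>a\<in>mr_carrier (assoc_mr G). \<forall>b\<in>mr_carrier (assoc_mr G). \<forall>c\<in>mr_carrier (assoc_mr G).
     c \<in> mr_add (assoc_mr G) a (mr_mul (assoc_mr G) a (mr_mul (assoc_mr G) b b)) \<longrightarrow> c = a"
    unfolding assoc_simps using R1 by blast
  show "\<forall>a\<in>mr_carrier (assoc_mr G). \<forall>b\<in>mr_carrier (assoc_mr G). \<forall>c\<in>mr_carrier (assoc_mr G). \<forall>d\<in>mr_carrier (assoc_mr G).
     c \<in> mr_add (assoc_mr G) (mr_mul (assoc_mr G) a a) (mr_mul (assoc_mr G) b b) \<and>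
     d \<in> mr_add (assoc_mr G) (mr_mul (assoc_mr G) a a) (mr_mul (assoc_mr G) b b) \<longrightarrow> c = d"
    unfolding assoc_simps using R2 by blast
qed

end

lemma morph_neg:
  assumes "RSG G" "rs_morphism G H f" "x \<in> rs_carrier G"
  shows "f (rs_neg G x) = rs_neg H (f x)"
proof -
  have "rs_mone G \<in> rs_carrier G" using RSG.Sm[OF assms(1)] .
  thus ?thesis using assms(2,3) unfolding rs_neg_def rs_morphism_def by simp
qed

lemma morph_D:
  assumes "rs_morphism G H f" "a \<in> rs_carrier G" "b \<in> rs_carrier G" "c \<in> rs_carrier G" "a \<in> rs_D G b c"
  shows "f a \<in> rs_D H (f b) (f c)"
  using assms unfolding rs_morphism_def by blast

theorem corollary6p8:
  fixes G :: "'a rsg" and H :: "'b rsg" and f :: "'a \<Rightarrow> 'b"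
  assumes "real_semigroup G" and "real_semigroup H" and "rs_morphism G H f"
  shows "real_reduced_multiring (assoc_mr G) \<and> real_reduced_multiring (assoc_mr H)
         \<and> mr_morphism (assoc_mr G) (assoc_mr H) f"
proof -
  have rg: "RSG G" using assms(1) by (rule RSG.intro)
  have rh: "RSG H" using assms(2) by (rule RSG.intro)
  have fS: "\<And>x. x \<in> rs_carrier G \<Longrightarrow> f x \<in> rs_carrier H" using assms(3) unfolding rs_morphism_def by blast
  have fm: "\<And>a b. a \<in> rs_carrier G \<Longrightarrow> b \<in> rs_carrier G \<Longrightarrow> f (rs_mul G a b) = rs_mul H (f a) (f b)"
    using assms(3) unfolding rs_morphism_def by blast
  have f01: "f (rs_one G) = rs_one H" "f (rs_zero G) = rs_zero H" using assms(3) unfolding rs_morphism_def by simp_all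
  have fn: "\<And>x. x \<in> rs_carrier G \<Longrightarrow> f (rs_neg G x) = rs_neg H (f x)" using morph_neg[OF rg assms(3)] .
  have fDt: "\<And>a b c. a \<in> rs_carrier G \<Longrightarrow> b \<in> rs_carrier G \<Longrightarrow> c \<in> rs_carrier G \<Longrightarrow> c \<in> rs_Dt G a b
     \<Longrightarrow> f c \<in> rs_Dt H (f a) (f b)"
  proof -
    fix a b c assume s: "a \<in> rs_carrier G" "b \<in> rs_carrier G" "c \<in> rs_carrier G" "c \<in> rs_Dt G a b"
    from s(4) have h: "c \<in> rs_D G a b" "rs_neg G a \<in> rs_D G (rs_neg G c) b" "rs_neg G b \<in> rs_D G a (rs_neg G c)"
      by (auto simp: rs_Dt_def)
    have na: "rs_neg G a \<in> rs_carrier G" and nb: "rs_neg G b \<in> rs_carrier G" and nc: "rs_neg G c \<in> rs_carrier G"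
      using RSG.nS[OF rg] s by blast+
    have 1: "f c \<in> rs_D H (f a) (f b)" using morph_D[OF assms(3) s(3,1,2) h(1)] .
    have 2: "f (rs_neg G a) \<in> rs_D H (f (rs_neg G c)) (f b)" using morph_D[OF assms(3) na nc s(2) h(2)] .
    have 3: "f (rs_neg G b) \<in> rs_D H (f a) (f (rs_neg G c))" using morph_D[OF assms(3) nb s(1) nc h(3)] .
    show "f c \<in> rs_Dt H (f a) (f b)" unfolding rs_Dt_def using 1 2 3 fn s by simp
  qed
  have mor: "mr_morphism (assoc_mr G) (assoc_mr H) f"
    unfolding mr_morphism_def RSG.assoc_simps[OF rg] RSG.assoc_simps[OF rh]
    using fS fDt fn f01 fm by blast
  show ?thesis using RSG.rrm_assoc[OF rg] RSG.rrm_assoc[OF rh] mor by blast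
qed

end
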